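(* Let $\mathcal{F}$ be a set of flows in the Clos network $C_{N,R}$. For all $i\in[R]$ and all positive integers $k$, the number of flows $f\in\mathcal{F}$ with $i(f)=i$ and $\mathrm{dem}(f)>\tfrac1k\cdot OPT(\mathcal{F})$ is at most $N(k-1)$. Similarly, for all $j\in[R]$ and all positive integers $l$, the number of flows $f\in\mathcal{F}$ with $j(f)=j$ and $\mathrm{dem}(f)>\tfrac1l\cdot OPT(\mathcal{F})$ is at most $N(l-1)$.
   Context: Clos network $C_{N,R}$: a directed graph with $N$ middle switches $M_1,\dots,M_N$, $R$ input switches $I_1,\dots,I_R$, $R$ output switches $O_1,\dots,O_R$, source servers $s_i^k$ and destination servers $t_i^k$ ($i\in[R]$, $k\in[N]$), and edges $s_i^kI_i$, $I_iM_m$, $M_mO_i$, $O_it_i^k$; all links have capacity $1$. A flow $f$ leaves input switch $I_{i(f)}$, enters output switch $O_{j(f)}$, and has positive demand $\mathrm{dem}(f)$; a set of flows has total demand at most $1$ leaving each source server and entering each destination server. A routing $r$ assigns each flow a single middle switch $r(f)\in[N]$; its congestion is $\max_{i\in[R],m\in[N]}\max\{\sum_{f:i(f)=i,r(f)=m}\mathrm{dem}(f),\ \sum_{f:j(f)=i,r(f)=m}\mathrm{dem}(f)\}$; $OPT(\mathcal{F})$ is the minimum congestion over all routings of $\mathcal{F}$. *)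

theory Defs
  imports Complex_Main
begin

text \<open>A set of flows is given by a finite index set F of flows
(an abstract type, so distinct flows may share all attributes). Flow f goes from
source server s_{i f}^{sk f} (attached to input switch I_{i f}) to destination server
t_{j f}^{tk f} (attached to output switch O_{j f}) with demand dem f.\<close>

definition valid_flows ::
  "nat \<Rightarrow> nat \<Rightarrow> 'f set \<Rightarrow> ('f \<Rightarrow> nat) \<Rightarrow> ('f \<Rightarrow> nat) \<Rightarrow> ('f \<Rightarrow> nat) \<Rightarrow> ('f \<Rightarrow> nat)
     \<Rightarrow> ('f \<Rightarrow> real) \<Rightarrow> bool" where
  "valid_flows N R F i sk j tk dem \<longleftrightarrow>
     finite F \<and>
     (\<forall>f\<in>F. i f \<in> {1..R} \<and> sk f \<in> {1..N} \<and> j f \<in> {1..R} \<and> tk f \<in> {1..N} \<and> dem f > 0) \<and>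
     (\<forall>a\<in>{1..R}. \<forall>k\<in>{1..N}. (\<Sum>f\<in>{f\<in>F. i f = a \<and> sk f = k}. dem f) \<le> 1) \<and>
     (\<forall>a\<in>{1..R}. \<forall>k\<in>{1..N}. (\<Sum>f\<in>{f\<in>F. j f = a \<and> tk f = k}. dem f) \<le> 1)"

definition is_routing :: "nat \<Rightarrow> 'f set \<Rightarrow> ('f \<Rightarrow> nat) \<Rightarrow> bool" where
  "is_routing N F r \<longleftrightarrow> (\<forall>f\<in>F. r f \<in> {1..N})"

definition congestion ::
  "nat \<Rightarrow> nat \<Rightarrow> 'f set \<Rightarrow> ('f \<Rightarrow> nat) \<Rightarrow> ('f \<Rightarrow> nat) \<Rightarrow> ('f \<Rightarrow> real) \<Rightarrow> ('f \<Rightarrow> nat) \<Rightarrow> real" where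
  "congestion N R F i j dem r =
     Max ((\<lambda>(a, m). max (\<Sum>f\<in>{f\<in>F. i f = a \<and> r f = m}. dem f)
                         (\<Sum>f\<in>{f\<in>F. j f = a \<and> r f = m}. dem f)) ` ({1..R} \<times> {1..N}))"

definition OPT ::
  "nat \<Rightarrow> nat \<Rightarrow> 'f set \<Rightarrow> ('f \<Rightarrow> nat) \<Rightarrow> ('f \<Rightarrow> nat) \<Rightarrow> ('f \<Rightarrow> real) \<Rightarrow> real" where
  "OPT N R F i j dem = Inf {congestion N R F i j dem r | r. is_routing N F r}"

end

theory Submission
  imports Defs "HOL-Library.FuncSet"
begin

lemma count_bound:
  fixes dem :: "'f \<Rightarrow> real" and C :: real and k :: nat
  assumes fin: "finite F" and pos: "\<forall>f\<in>F. dem f > 0"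
    and rout: "\<forall>f\<in>F. r f \<in> {1..N}"
    and load: "\<forall>m\<in>{1..N}. (\<Sum>f\<in>{f\<in>F. g f = a \<and> r f = m}. dem f) \<le> C"
    and k: "k \<ge> 1" and C0: "C \<ge> 0"
  shows "card {f\<in>F. g f = a \<and> dem f > C / real k} \<le> N * (k - 1)"
proof -
  let ?A = "{f\<in>F. g f = a \<and> dem f > C / real k}"
  let ?B = "\<lambda>m. {f\<in>?A. r f = m}"
  have eq: "?A = (\<Union>m\<in>{1..N}. ?B m)" using rout by auto
  have each: "card (?B m) \<le> k - 1" if m: "m \<in> {1..N}" for m
  proof (rule ccontr)
    assume "\<not> card (?B m) \<le> k - 1"
    hence ck: "card (?B m) \<ge> k" by simp
    have finB: "finite (?B m)" using fin by auto
    have ne: "?B m \<noteq> {}" using ck k by (metis card.empty le_zero_eq not_one_le_zero)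
    have "(\<Sum>f\<in>?B m. C / real k) < (\<Sum>f\<in>?B m. dem f)"
      by (rule sum_strict_mono[OF finB ne]) auto
    moreover have "(\<Sum>f\<in>?B m. C / real k) = real (card (?B m)) * (C / real k)" by simp
    moreover have "real (card (?B m)) * (C / real k) \<ge> real k * (C / real k)"
      using ck C0 by (intro mult_right_mono) auto
    moreover have "real k * (C / real k) = C" using k by simp
    moreover have "(\<Sum>f\<in>?B m. dem f) \<le> (\<Sum>f\<in>{f\<in>F. g f = a \<and> r f = m}. dem f)"
      by (rule sum_mono2) (use fin pos in auto)
    ultimately show False using load m by fastforce
  qed
  have "card ?A \<le> (\<Sum>m\<in>{1..N}. card (?B m))"
    by (subst eq) (rule card_UN_le, simp)
  also have "\<dots> \<le> (\<Sum>m\<in>{1..N}. k - 1)" by (rule sum_mono) (use each in auto)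
  also have "\<dots> = N * (k - 1)" by simp
  finally show ?thesis .
qed

lemma opt_attained:
  fixes dem :: "'f \<Rightarrow> real"
  assumes N: "N \<ge> 1" and fin: "finite F"
  shows "\<exists>r. is_routing N F r \<and> congestion N R F i j dem r = OPT N R F i j dem"
proof -
  let ?S = "{congestion N R F i j dem r | r. is_routing N F r}"
  have cr: "congestion N R F i j dem r = congestion N R F i j dem (restrict r F)" for r
    unfolding congestion_def
    by (intro arg_cong[where f=Max] image_cong refl) (auto intro!: arg_cong2[where f=max] sum.cong simp: restrict_def)
  have sub: "?S \<subseteq> (congestion N R F i j dem) ` (F \<rightarrow>\<^sub>E {1..N})"
  proof
    fix x assume "x \<in> ?S"
    then obtain r where "is_routing N F r" "x = congestion N R F i j dem r" by auto
    then show "x \<in> (congestion N R F i j dem) ` (F \<rightarrow>\<^sub>E {1..N})"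
      using cr[of r] unfolding is_routing_def by (intro image_eqI[of _ _ "restrict r F"]) auto
  qed
  have finS: "finite ?S" using finite_subset[OF sub] fin by (simp add: finite_PiE)
  have "is_routing N F (\<lambda>_. 1)" using N unfolding is_routing_def by auto
  hence neS: "?S \<noteq> {}" by blast
  have "Inf ?S \<in> ?S" using finS neS cInf_eq_Min[OF finS neS] Min_in[OF finS neS] by simp
  then show ?thesis unfolding OPT_def by auto
qed

theorem mainTheorem9:
  fixes N R :: nat and F :: "'f set" and i sk j tk :: "'f \<Rightarrow> nat" and dem :: "'f \<Rightarrow> real"
  assumes "N \<ge> 1" and "R \<ge> 1"
    and "valid_flows N R F i sk j tk dem"
  shows "(\<forall>a\<in>{1..R}. \<forall>k::nat. k \<ge> 1 \<longrightarrow>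
            card {f\<in>F. i f = a \<and> dem f > OPT N R F i j dem / real k} \<le> N * (k - 1))
       \<and> (\<forall>a\<in>{1..R}. \<forall>l::nat. l \<ge> 1 \<longrightarrow>
            card {f\<in>F. j f = a \<and> dem f > OPT N R F i j dem / real l} \<le> N * (l - 1))"
proof -
  have fin: "finite F" and pos: "\<forall>f\<in>F. dem f > 0"
    using assms(3) unfolding valid_flows_def by auto
  obtain r where rr: "is_routing N F r" and rc: "congestion N R F i j dem r = OPT N R F i j dem"
    using opt_attained[OF assms(1) fin] by blast
  let ?C = "OPT N R F i j dem"
  let ?L = "(\<lambda>(a, m). max (\<Sum>f\<in>{f\<in>F. i f = a \<and> r f = m}. dem f)
                         (\<Sum>f\<in>{f\<in>F. j f = a \<and> r f = m}. dem f))"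
  have le: "?L (a, m) \<le> ?C" if "a \<in> {1..R}" "m \<in> {1..N}" for a m
    unfolding rc[symmetric] congestion_def by (rule Max_ge) (use that in auto)
  have nn: "(\<Sum>f\<in>X. dem f) \<ge> 0" if "X \<subseteq> F" for X
    using pos that by (intro sum_nonneg) (auto intro: less_imp_le)
  have C0: "?C \<ge> 0"
    using le[of 1 1] assms(1,2) nn[of "{f\<in>F. i f = 1 \<and> r f = 1}"] by auto
  have rout: "\<forall>f\<in>F. r f \<in> {1..N}" using rr unfolding is_routing_def by auto
  show ?thesis
  proof (intro conjI ballI allI impI)
    fix a k assume a: "a \<in> {1..R}" and k: "(1::nat) \<le> k"
    show "card {f\<in>F. i f = a \<and> dem f > ?C / real k} \<le> N * (k - 1)"
      by (rule count_bound[OF fin pos rout _ k C0, of i a]) (use le[OF a] in fastforce)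
  next
    fix a k assume a: "a \<in> {1..R}" and k: "(1::nat) \<le> k"
    show "card {f\<in>F. j f = a \<and> dem f > ?C / real k} \<le> N * (k - 1)"
      by (rule count_bound[OF fin pos rout _ k C0, of j a]) (use le[OF a] in fastforce)
  qed
qed

end
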